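(* For $s\in[0,1]$ let $|\alpha^n_s\rangle$ be the (unique) ground state of $H^n_s=(1-s)\sum_{k=1}^n|-\rangle\langle-|_k+s\sum_{k=1}^n|1\rangle\langle1|_k$; it has the form $(\cos\varphi_s|0\rangle+\sin\varphi_s|1\rangle)^{\otimes n}=(\cos\xi_s|+\rangle+\sin\xi_s|-\rangle)^{\otimes n}$ with $\varphi_s\in[0,\pi/4]$, $\xi_s=\pi/4-\varphi_s$. For every real $\vartheta\ge n/2$ and every $s\in[0,1]$, $$\sum_{j:\,h(j)\ge\vartheta}\Big(|\langle j|\alpha^n_s\rangle|^2+|\langle j_+|\alpha^n_s\rangle|^2\Big)\le2\exp\!\Big(-\frac{2(\vartheta-n/2)^2}{3n}\Big).$$
   Context: On $n$ qubits with computational basis $|j\rangle$, $j\in\{0,\dots,2^n-1\}$: $h(j)$ is the Hamming weight of $j$ and $|j_+\rangle=\mathsf H^{\otimes n}|j\rangle$ with $\mathsf H$ the Hadamard gate; subscript $k$ means the operator acts on qubit $k$. *)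

theory Defs
  imports Complex_Main
begin

text \<open>States on n qubits are functions nat => complex supported on {0..<2^n};
  operators are functions nat => nat => complex (matrix entries on {0..<2^n}).
  Qubit k (k = 1..n) corresponds to bit (k-1) of the basis index j.\<close>

definition hamming :: "nat \<Rightarrow> nat \<Rightarrow> nat" where
  "hamming n j = card {i. i < n \<and> bit j i}"

text \<open>Matrix entry of |-><-| acting on qubit (bit) k, identity elsewhere.\<close>
definition minus_proj :: "nat \<Rightarrow> nat \<Rightarrow> nat \<Rightarrow> nat \<Rightarrow> complex" where
  "minus_proj n k j j' =
     (if (\<forall>i<n. i \<noteq> k \<longrightarrow> (bit j i \<longleftrightarrow> bit j' i))
      then (if (bit j k \<longleftrightarrow> bit j' k) then 1/2 else -1/2) else 0)"

definition one_proj :: "nat \<Rightarrow> nat \<Rightarrow> nat \<Rightarrow> complex" where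
  "one_proj k j j' = (if j = j' \<and> bit j k then 1 else 0)"

definition Ham :: "nat \<Rightarrow> real \<Rightarrow> nat \<Rightarrow> nat \<Rightarrow> complex" where
  "Ham n s j j' = of_real (1 - s) * (\<Sum>k<n. minus_proj n k j j')
                 + of_real s * (\<Sum>k<n. one_proj k j j')"

definition matvec :: "nat \<Rightarrow> (nat \<Rightarrow> nat \<Rightarrow> complex) \<Rightarrow> (nat \<Rightarrow> complex) \<Rightarrow> nat \<Rightarrow> complex" where
  "matvec n M v = (\<lambda>i. if i < 2^n then (\<Sum>j<2^n. M i j * v j) else 0)"

definition is_state :: "nat \<Rightarrow> (nat \<Rightarrow> complex) \<Rightarrow> bool" where
  "is_state n v \<longleftrightarrow> (\<forall>j\<ge>2^n. v j = 0)"

definition is_eigenvalue :: "nat \<Rightarrow> (nat \<Rightarrow> nat \<Rightarrow> complex) \<Rightarrow> complex \<Rightarrow> bool" where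
  "is_eigenvalue n M E \<longleftrightarrow>
     (\<exists>v. is_state n v \<and> (\<exists>j<2^n. v j \<noteq> 0) \<and> matvec n M v = (\<lambda>i. E * v i))"

definition ground_state :: "nat \<Rightarrow> (nat \<Rightarrow> nat \<Rightarrow> complex) \<Rightarrow> (nat \<Rightarrow> complex) \<Rightarrow> bool" where
  "ground_state n M \<alpha> \<longleftrightarrow> is_state n \<alpha> \<and> (\<Sum>j<2^n. (cmod (\<alpha> j))^2) = 1 \<and>
     (\<exists>E. matvec n M \<alpha> = (\<lambda>i. E * \<alpha> i) \<and> (\<forall>E'. is_eigenvalue n M E' \<longrightarrow> Re E \<le> Re E'))"

text \<open>Amplitude <j_+|v> where |j_+> = H^{\<otimes>n}|j>; (H^{\<otimes>n})_{j',j} = (-1)^{h(j' AND j)} / sqrt(2^n), real.\<close>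
definition hadamard_amp :: "nat \<Rightarrow> nat \<Rightarrow> (nat \<Rightarrow> complex) \<Rightarrow> complex" where
  "hadamard_amp n j v = (\<Sum>j'<2^n. of_real ((-1) ^ hamming n (and j j') / sqrt (2^n)) * v j')"

end

theory Submission imports Defs "HOL-Probability.Hoeffding" begin

lemma sum_double_split:
  fixes F :: "nat \<Rightarrow> 'a::comm_monoid_add"
  shows "(\<Sum>x<2*m. F x) = (\<Sum>y<m. F (2*y)) + (\<Sum>y<m. F (2*y+1))"
  by (induction m) (simp_all add: algebra_simps)

lemma sum_prod_bits:
  fixes f :: "nat \<Rightarrow> bool \<Rightarrow> 'a::comm_semiring_1"
  shows "(\<Sum>x::nat<2^n. \<Prod>i<n. f i (bit x i)) = (\<Prod>i<n. f i False + f i True)"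
proof (induction n arbitrary: f)
  case 0 then show ?case by simp
next
  case (Suc n)
  have e: "(\<Prod>i<Suc n. f i (bit x i)) = f 0 (odd x) * (\<Prod>i<n. f (Suc i) (bit (x div 2) i))" for x :: nat
    by (subst prod.lessThan_Suc_shift) (simp add: bit_Suc bit_0)
  have "(\<Sum>x::nat<2^Suc n. \<Prod>i<Suc n. f i (bit x i))
      = (\<Sum>y::nat<2^n. f 0 False * (\<Prod>i<n. f (Suc i) (bit y i))) + (\<Sum>y::nat<2^n. f 0 True * (\<Prod>i<n. f (Suc i) (bit y i)))"
    by (simp only: power_Suc sum_double_split e) simp
  also have "\<dots> = (f 0 False + f 0 True) * (\<Prod>i<n. f (Suc i) False + f (Suc i) True)"
    using Suc[of "\<lambda>i. f (Suc i)"] by (simp add: sum_distrib_left[symmetric] distrib_right)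
  also have "\<dots> = (\<Prod>i<Suc n. f i False + f i True)"
    by (subst prod.lessThan_Suc_shift) simp
  finally show ?case .
qed

lemma bit_ge_false: "(j::nat) < 2^n \<Longrightarrow> n \<le> i \<Longrightarrow> \<not> bit j i"
proof -
  assume "j < 2^n" "n \<le> i"
  then have "j < 2^i" by (meson order_less_le_trans one_le_numeral power_increasing)
  then show ?thesis by (simp add: bit_iff_odd)
qed

lemma eq_bits: "(j::nat) < 2^n \<Longrightarrow> j' < 2^n \<Longrightarrow> (j = j') = (\<forall>i<n. bit j i = bit j' i)"
  by (metis bit_eq_iff bit_ge_false not_le)

lemma prod_indic:
  fixes P :: "nat \<Rightarrow> bool"
  assumes "finite S"
  shows "(\<Prod>i\<in>S. (if P i then 1 else 0::'a::comm_semiring_1)) = (if \<forall>i\<in>S. P i then 1 else 0)"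
  using assms by (induction S rule: finite_induct) auto

lemma prod_sign_card:
  fixes P :: "nat \<Rightarrow> bool" shows
  "(\<Prod>i<n. (if P i then -1 else 1::'a::comm_ring_1)) = (-1) ^ card {i. i < n \<and> P i}"
proof -
  have "(\<Prod>i<n. (if P i then -1 else 1::'a)) = (\<Prod>i\<in>{..<n} \<inter> {i. P i}. -1) * (\<Prod>i\<in>{..<n} \<inter> - {i. P i}. 1)"
    using prod.If_cases[OF finite_lessThan, of P "\<lambda>_. -1::'a" "\<lambda>_. 1" n] by simp
  also have "{..<n} \<inter> {i. P i} = {i. i < n \<and> P i}" by auto
  finally show ?thesis by simp
qed

lemma prod_exp_card:
  fixes P :: "nat \<Rightarrow> bool" shows
  "(\<Prod>i<n. (if P i then exp t else 1::real)) = exp (t * real (card {i. i < n \<and> P i}))"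
proof -
  have "(\<Prod>i<n. (if P i then exp t else 1::real)) = (\<Prod>i\<in>{..<n} \<inter> {i. P i}. exp t) * (\<Prod>i\<in>{..<n} \<inter> - {i. P i}. 1)"
    using prod.If_cases[OF finite_lessThan, of P "\<lambda>_. exp t" "\<lambda>_. 1" n] by simp
  also have "{..<n} \<inter> {i. P i} = {i. i < n \<and> P i}" by auto
  finally show ?thesis by (simp add: exp_of_nat_mult[symmetric] mult.commute)
qed

lemma one_plus_le_exp:
  fixes p t :: real assumes "0 \<le> p" "p \<le> 1/2" "0 \<le> t"
  shows "1 - p + p * exp t \<le> exp (t/2 + t^2/8)"
proof -
  have pos: "0 < 1 + p * (exp t - 1)"
    using assms by (smt (verit) mult_nonneg_nonneg one_le_exp_iff)
  have "ln (1 + p * (exp t - 1)) \<le> t * p + t^2/8"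
    using Hoeffdings_lemma_aux[of t p] assms by simp
  then have "1 + p * (exp t - 1) \<le> exp (t * p + t^2/8)"
    using pos by (metis exp_le_cancel_iff exp_ln)
  also have "\<dots> \<le> exp (t/2 + t^2/8)"
    using assms mult_left_mono[of p "1/2" t] by simp
  finally show ?thesis by (simp add: algebra_simps)
qed

lemma chernoff:
  fixes p \<theta> :: real and n :: nat
  assumes p0: "0 \<le> p" and p1: "p \<le> 1/2" and th: "\<theta> \<ge> real n / 2"
  shows "(\<Sum>j\<in>{j. j < 2^n \<and> real (hamming n j) \<ge> \<theta>}. \<Prod>i<n. (if bit j i then p else 1-p))
         \<le> exp (- (2 * (\<theta> - real n / 2)^2) / (3 * real n))"
proof -
  define w where "w j = (\<Prod>i<n. (if bit j i then p else 1-p))" for j :: nat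
  define S where "S = {j. j < 2^n \<and> real (hamming n j) \<ge> \<theta>}"
  have w0: "w j \<ge> 0" for j unfolding w_def using p0 p1 by (intro prod_nonneg) auto
  have Ssub: "S \<subseteq> {..<2^n}" unfolding S_def by auto
  show ?thesis
  proof (cases "n = 0")
    case True
    have "sum w S \<le> sum w {..<2^n}" using Ssub w0 by (intro sum_mono2) auto
    also have "\<dots> = 1" unfolding w_def using sum_prod_bits[of "\<lambda>i b. if b then p else 1-p" n] by simp
    finally show ?thesis using True by (simp add: w_def S_def)
  next
    case False
    then have npos: "real n > 0" by simp
    define d where "d = \<theta> - real n / 2"
    have d0: "d \<ge> 0" using th by (simp add: d_def)
    define t where "t = 4 * d / real n"
    have t0: "t \<ge> 0" using d0 npos by (simp add: t_def)
    have hexp: "w j * exp (t * real (hamming n j)) = (\<Prod>i<n. (if bit j i then p * exp t else 1-p))" for j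
    proof -
      have "exp (t * real (hamming n j)) = (\<Prod>i<n. (if bit j i then exp t else 1))"
        using prod_exp_card[of "bit j" t n] by (simp add: hamming_def)
      then show ?thesis unfolding w_def by (simp add: prod.distrib[symmetric] if_distrib if_distribR cong: if_cong)
    qed
    have "sum w S \<le> (\<Sum>j\<in>S. w j * exp (t * (real (hamming n j) - \<theta>)))"
    proof (rule sum_mono)
      fix j assume "j \<in> S"
      then have "exp (t * (real (hamming n j) - \<theta>)) \<ge> 1" using t0 by (simp add: S_def)
      then show "w j \<le> w j * exp (t * (real (hamming n j) - \<theta>))"
        using w0[of j] by (metis mult.right_neutral mult_left_mono)
    qed
    also have "\<dots> \<le> (\<Sum>j<2^n. w j * exp (t * (real (hamming n j) - \<theta>)))"
      using Ssub w0 by (intro sum_mono2) auto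
    also have "\<dots> = exp (- t * \<theta>) * (\<Sum>j<2^n. w j * exp (t * real (hamming n j)))"
      by (simp add: sum_distrib_left algebra_simps exp_diff exp_minus field_simps)
    also have "(\<Sum>j<2^n. w j * exp (t * real (hamming n j))) = (1 - p + p * exp t)^n"
      using sum_prod_bits[of "\<lambda>i b. if b then p * exp t else 1-p" n] by (simp add: hexp add.commute)
    also have "\<dots> \<le> exp (t/2 + t^2/8) ^ n"
      using one_plus_le_exp[OF p0 p1 t0] p0 p1 t0
      by (intro power_mono) (auto intro!: add_nonneg_nonneg)
    also have "exp (- t * \<theta>) * exp (t/2 + t^2/8) ^ n = exp (- (2 * d^2) / real n)"
    proof -
      have "exp (- t * \<theta>) * exp (t/2 + t^2/8) ^ n = exp (- t * \<theta> + real n * (t/2 + t^2/8))"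
        by (simp only: exp_add[symmetric] exp_of_nat_mult[symmetric])
      also have "- t * \<theta> + real n * (t/2 + t^2/8) = - (2 * d^2) / real n"
        using npos unfolding t_def d_def by (simp add: field_simps power2_eq_square)
      finally show ?thesis .
    qed
    also have "\<dots> \<le> exp (- (2 * d^2) / (3 * real n))"
      using npos by (simp add: divide_simps)
    finally show ?thesis by (simp add: w_def S_def d_def)
  qed
qed

definition vv :: "real \<Rightarrow> real \<Rightarrow> bool \<Rightarrow> bool \<Rightarrow> real" where
  "vv a b y c = (if y then (if c then a else -b) else (if c then b else a))"

definition hm :: "real \<Rightarrow> bool \<Rightarrow> bool \<Rightarrow> real" where
  "hm s c c' = (1-s) * (if c = c' then 1/2 else -1/2) + s * (if c \<and> c' then 1 else 0)"

definition Hr :: "nat \<Rightarrow> real \<Rightarrow> nat \<Rightarrow> nat \<Rightarrow> real" where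
  "Hr n s j j' = (\<Sum>k<n. \<Prod>i<n. if i = k then hm s (bit j i) (bit j' i) else (if bit j i = bit j' i then 1 else 0))"

lemma prod_single_out:
  fixes k n :: nat and Q :: "nat \<Rightarrow> bool" and X :: "nat \<Rightarrow> real"
  assumes "k < n"
  shows "(\<Prod>i<n. if i = k then X i else (if Q i then 1 else 0::real))
         = X k * (if \<forall>i<n. i \<noteq> k \<longrightarrow> Q i then 1 else 0)"
proof -
  have "(\<Prod>i<n. if i = k then X i else (if Q i then 1 else 0::real))
     = X k * (\<Prod>i\<in>{..<n} - {k}. if i = k then X i else (if Q i then 1 else 0::real))"
    using assms by (subst prod.remove[OF finite_lessThan, of k]) auto
  also have "(\<Prod>i\<in>{..<n} - {k}. if i = k then X i else (if Q i then 1 else 0::real))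
     = (\<Prod>i\<in>{..<n} - {k}. (if Q i then 1 else 0::real))"
    by (rule prod.cong) auto
  also have "\<dots> = (if \<forall>i\<in>{..<n} - {k}. Q i then 1 else 0)" by (rule prod_indic) simp
  finally show ?thesis by auto
qed

lemma Ham_prod:
  assumes j: "j < 2^n" and j': "j' < 2^n"
  shows "Ham n s j j' = of_real (Hr n s j j')"
proof -
  have "Ham n s j j' = (\<Sum>k<n. of_real (1 - s) * minus_proj n k j j' + of_real s * one_proj k j j')"
    unfolding Ham_def by (simp add: sum.distrib sum_distrib_left)
  also have "\<dots> = (\<Sum>k<n. of_real (\<Prod>i<n. if i = k then hm s (bit j i) (bit j' i) else (if bit j i = bit j' i then 1 else 0)))"
  proof (rule sum.cong[OF refl])
    fix k assume "k \<in> {..<n}"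
    then have k: "k < n" by simp
    have eq: "(j = j') = ((\<forall>i<n. i \<noteq> k \<longrightarrow> bit j i = bit j' i) \<and> bit j k = bit j' k)"
      using eq_bits[OF j j'] k by auto
    show "of_real (1 - s) * minus_proj n k j j' + of_real s * one_proj k j j' =
      complex_of_real (\<Prod>i<n. if i = k then hm s (bit j i) (bit j' i) else (if bit j i = bit j' i then 1 else 0))"
      unfolding prod_single_out[OF k, of "\<lambda>i. hm s (bit j i) (bit j' i)"]
      unfolding minus_proj_def one_proj_def hm_def eq
      by auto
  qed
  finally show ?thesis by (simp add: Hr_def)
qed

lemma Ham_sym: "Ham n s j j' = Ham n s j' j"
  unfolding Ham_def minus_proj_def one_proj_def by (auto intro!: sum.cong arg_cong2[where f="(+)"] arg_cong2[where f="(*)"])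

lemma eig_exists:
  fixes s :: real assumes s0: "0 \<le> s" and s1: "s \<le> 1"
  shows "\<exists>a b l0 l1. a^2 + b^2 = 1 \<and> 0 \<le> b \<and> b \<le> a \<and> l0 < l1 \<and>
     (\<forall>y c'. vv a b y False * hm s False c' + vv a b y True * hm s True c' = (if y then l1 else l0) * vv a b y c')"
proof -
  define A where "A = (1 - s) / 2"
  define r where "r = sqrt (A^2 + s^2/4)"
  have A0: "A \<ge> 0" using s1 by (simp add: A_def)
  have pos: "A^2 + s^2/4 > 0"
  proof (cases "s = 0")
    case True then show ?thesis by (simp add: A_def)
  next
    case False then show ?thesis using s0 by (simp add: add_nonneg_pos)
  qed
  have r2: "r^2 = A^2 + s^2/4" unfolding r_def using pos by simp
  have r0: "r > 0" unfolding r_def using pos by simp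
  have rA: "A \<le> r" unfolding r_def using A0 s0 by (intro real_le_rsqrt) simp
  define a' where "a' = r + s/2"
  define b' where "b' = A"
  define N where "N = a'^2 + b'^2"
  have a'0: "a' > 0" using r0 s0 by (simp add: a'_def)
  have N0: "N > 0" unfolding N_def using a'0 by (simp add: add_pos_nonneg)
  define q where "q = sqrt N"
  have q0: "q > 0" using N0 by (simp add: q_def)
  have q2: "q^2 = N" using N0 by (simp add: q_def)
  define a where "a = a' / q"
  define b where "b = b' / q"
  define l0 where "l0 = A + s/2 - r"
  define l1 where "l1 = A + s/2 + r"
  have e1: "a' * A + b' * (-A) = l0 * a'" unfolding a'_def b'_def l0_def using r2 by (simp add: algebra_simps power2_eq_square)
  have e2: "a' * (-A) + b' * (A + s) = l0 * b'" unfolding a'_def b'_def l0_def by (simp add: algebra_simps)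
  have e3: "(-b') * A + a' * (-A) = l1 * (-b')" unfolding a'_def b'_def l1_def by (simp add: algebra_simps)
  have e4: "(-b') * (-A) + a' * (A + s) = l1 * a'" unfolding a'_def b'_def l1_def using r2 by (simp add: algebra_simps power2_eq_square)
  have hFF: "hm s False False = A" and hFT: "hm s False True = -A" and hTF: "hm s True False = -A"
    and hTT: "hm s True True = A + s" by (simp_all add: hm_def A_def algebra_simps)
  have "a^2 + b^2 = 1" unfolding a_def b_def using q2 N0 a'0 by (simp add: power_divide N_def add_divide_distrib[symmetric])
  moreover have "0 \<le> b" unfolding b_def b'_def using A0 q0 by simp
  moreover have "b \<le> a" unfolding a_def b_def a'_def b'_def using rA s0 q0 by (simp add: divide_right_mono)
  moreover have "l0 < l1" using r0 by (simp add: l0_def l1_def)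
  moreover have "\<forall>y c'. vv a b y False * hm s False c' + vv a b y True * hm s True c' = (if y then l1 else l0) * vv a b y c'"
  proof (intro allI)
    fix y c'
    show "vv a b y False * hm s False c' + vv a b y True * hm s True c' = (if y then l1 else l0) * vv a b y c'"
    proof -
      have "\<forall>u v. (u = v) = (u * q = v * q)" using q0 by simp
      then show ?thesis
        using e1 e2 e3 e4 q0
        by (cases y; cases c') (simp_all add: vv_def hFF hFT hTF hTT a_def b_def field_simps)
    qed
  qed
  ultimately show ?thesis by blast
qed

locale gsl =
  fixes n :: nat and s a b l0 l1 :: real
  assumes ab: "a^2 + b^2 = 1" and b0: "0 \<le> b" and ba: "b \<le> a" and ll: "l0 < l1"
    and eig: "\<And>y c'. vv a b y False * hm s False c' + vv a b y True * hm s True c' = (if y then l1 else l0) * vv a b y c'"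
begin

definition T :: "nat \<Rightarrow> nat \<Rightarrow> real" where "T x j = (\<Prod>i<n. vv a b (bit x i) (bit j i))"
definition mu :: "nat \<Rightarrow> real" where "mu x = (\<Sum>k<n. if bit x k then l1 else l0)"

lemma T_Hr: "(\<Sum>j::nat<2^n. T x j * Hr n s j j') = mu x * T x j'"
proof -
  have "(\<Sum>j::nat<2^n. T x j * Hr n s j j') = (\<Sum>k<n. \<Sum>j::nat<2^n. \<Prod>i<n. vv a b (bit x i) (bit j i) *
      (if i = k then hm s (bit j i) (bit j' i) else (if bit j i = bit j' i then 1 else 0)))"
    unfolding T_def Hr_def by (simp add: sum_distrib_left prod.distrib sum.swap[of _ "{..<n}"])
  also have "\<dots> = (\<Sum>k<n. \<Prod>i<n. (if i = k then (if bit x i then l1 else l0) else 1) * vv a b (bit x i) (bit j' i))"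
  proof (rule sum.cong[OF refl])
    fix k
    show "(\<Sum>j::nat<2^n. \<Prod>i<n. vv a b (bit x i) (bit j i) *
      (if i = k then hm s (bit j i) (bit j' i) else (if bit j i = bit j' i then 1 else 0)))
      = (\<Prod>i<n. (if i = k then (if bit x i then l1 else l0) else 1) * vv a b (bit x i) (bit j' i))"
      unfolding sum_prod_bits[of "\<lambda>i c. vv a b (bit x i) c * (if i = k then hm s c (bit j' i) else (if c = bit j' i then 1 else 0))" n]
    proof (rule prod.cong[OF refl])
      fix i
      show "vv a b (bit x i) False * (if i = k then hm s False (bit j' i) else if False = bit j' i then 1 else 0) +
            vv a b (bit x i) True * (if i = k then hm s True (bit j' i) else if True = bit j' i then 1 else 0) =
            (if i = k then if bit x i then l1 else l0 else 1) * vv a b (bit x i) (bit j' i)"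
        using eig[of "bit x i" "bit j' i"] by (cases "i = k"; cases "bit j' i") auto
    qed
  qed
  also have "\<dots> = (\<Sum>k<n. (if bit x k then l1 else l0) * T x j')"
    unfolding T_def prod.distrib by (simp add: prod.delta)
  finally show ?thesis by (simp add: mu_def sum_distrib_right)
qed

lemma T_orth:
  fixes j j' :: nat
  assumes j: "j < 2^n" and j': "j' < 2^n"
  shows "(\<Sum>x::nat<2^n. T x j * T x j') = (if j = j' then 1 else 0)"
proof -
  have "(\<Sum>x::nat<2^n. T x j * T x j') = (\<Prod>i<n. (if bit j i = bit j' i then 1 else 0))"
    unfolding T_def prod.distrib[symmetric]
    unfolding sum_prod_bits[of "\<lambda>i y. vv a b y (bit j i) * vv a b y (bit j' i)" n]
    using ab by (intro prod.cong refl) (auto simp: vv_def power2_eq_square)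
  also have "\<dots> = (if j = j' then 1 else 0)"
    using prod_indic[of "{..<n}" "\<lambda>i. bit j i = bit j' i"] eq_bits[OF j j'] by auto
  finally show ?thesis .
qed

lemma mu_gt:
  assumes "0 < x" "x < 2^n" shows "mu 0 < mu x"
proof -
  have "\<exists>k. bit x k"
  proof (rule ccontr)
    assume "\<not> (\<exists>k. bit x k)"
    then have "x = 0" by (simp add: bit_eq_iff)
    then show False using assms(1) by simp
  qed
  then obtain k where k: "bit x k" by blast
  then have kn: "k < n" using bit_ge_false[OF assms(2)] not_le by blast
  have "mu x - mu 0 = (\<Sum>i<n. (if bit x i then l1 else l0) - l0)" by (simp add: mu_def sum_subtractf)
  also have "\<dots> \<ge> (if bit x k then l1 else l0) - l0"
    using kn ll by (intro member_le_sum) auto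
  finally show ?thesis using k ll by simp
qed

lemma T0_sq: "T 0 j ^ 2 = (\<Prod>i<n. (if bit j i then b^2 else 1 - b^2))"
  unfolding T_def prod_power_distrib using ab by (intro prod.cong refl) (auto simp: vv_def)

lemma T0_zero: "T 0 0 = a ^ n" by (simp add: T_def vv_def)

lemma a_pos: "a > 0"
proof -
  have "a \<ge> 0" using b0 ba by simp
  moreover have "a \<noteq> 0" using ab b0 ba by auto
  ultimately show ?thesis by simp
qed

lemma had_real:
  "(\<Sum>j'::nat<2^n. (-1) ^ hamming n (and j j') / sqrt (2^n) * T 0 j')
   = (\<Prod>i<n. if bit j i then (a-b)/sqrt 2 else (a+b)/sqrt 2)"
proof -
  have tm: "(-1) ^ hamming n (and j j') / sqrt (2^n) * T 0 j'
     = (\<Prod>i<n. (if bit j i \<and> bit j' i then -1 else 1) / sqrt 2 * vv a b False (bit j' i))" for j' :: nat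
  proof -
    have "(-1::real) ^ hamming n (and j j') = (\<Prod>i<n. (if bit j i \<and> bit j' i then -1 else 1))"
      using prod_sign_card[where 'a=real, of "\<lambda>i. bit j i \<and> bit j' i" n] by (simp add: hamming_def bit_and_iff)
    moreover have "sqrt (2^n) = (\<Prod>i<n. sqrt (2::real))" by (simp add: real_sqrt_power)
    ultimately show ?thesis
      by (simp add: T_def prod.distrib prod_dividef)
  qed
  show ?thesis
    unfolding tm
    unfolding sum_prod_bits[of "\<lambda>i c. (if bit j i \<and> c then -1 else 1) / sqrt 2 * vv a b False c" n]
    by (intro prod.cong refl) (auto simp: vv_def field_simps)
qed

lemma had_amp:
  assumes "\<forall>j'<2^n. \<alpha> j' = c * of_real (T 0 j')"
  shows "hadamard_amp n j \<alpha> = c * of_real (\<Prod>i<n. if bit j i then (a-b)/sqrt 2 else (a+b)/sqrt 2)"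
proof -
  have "hadamard_amp n j \<alpha> = (\<Sum>j'<2^n. c * of_real ((-1) ^ hamming n (and j j') / sqrt (2^n) * T 0 j'))"
    unfolding hadamard_amp_def using assms by (intro sum.cong refl) (simp add: algebra_simps)
  also have "\<dots> = c * of_real (\<Sum>j'<2^n. (-1) ^ hamming n (and j j') / sqrt (2^n) * T 0 j')"
    by (simp add: sum_distrib_left)
  finally show ?thesis unfolding had_real .
qed

lemma had_sq:
  "(\<Prod>i<n. if bit j i then (a-b)/sqrt 2 else (a+b)/sqrt 2) ^ 2
   = (\<Prod>i<n. if bit j i then (1/2 - a*b) else 1 - (1/2 - a*b))"
  unfolding prod_power_distrib using ab
  by (intro prod.cong refl) (auto simp: power_divide power2_eq_square field_simps)


end

theorem mainTheorem14:
  fixes n :: nat and s \<theta> :: real and \<alpha> :: "nat \<Rightarrow> complex"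
  assumes "0 \<le> s" and "s \<le> 1"
    and "\<theta> \<ge> real n / 2"
    and "ground_state n (Ham n s) \<alpha>"
  shows "(\<Sum>j\<in>{j. j < 2^n \<and> real (hamming n j) \<ge> \<theta>}.
            (cmod (\<alpha> j))^2 + (cmod (hadamard_amp n j \<alpha>))^2)
         \<le> 2 * exp (- (2 * (\<theta> - real n / 2)^2) / (3 * real n))"
proof -
  from eig_exists[OF assms(1,2)] obtain a b l0 l1 where H: "a^2 + b^2 = 1" "0 \<le> b" "b \<le> a" "l0 < l1"
    "\<forall>y c'. vv a b y False * hm s False c' + vv a b y True * hm s True c' = (if y then l1 else l0) * vv a b y c'"
    by blast
  interpret g: gsl n s a b l0 l1 by unfold_locales (use H in auto)
  from assms(4) obtain E where st: "is_state n \<alpha>" and nrm: "(\<Sum>j<2^n. (cmod (\<alpha> j))^2) = 1"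
    and ev: "matvec n (Ham n s) \<alpha> = (\<lambda>i. E * \<alpha> i)"
    and mn: "\<forall>E'. is_eigenvalue n (Ham n s) E' \<longrightarrow> Re E \<le> Re E'"
    unfolding ground_state_def by blast
  define \<psi> where "\<psi> j = (if j < 2^n then complex_of_real (g.T 0 j) else 0)" for j
  have "is_eigenvalue n (Ham n s) (of_real (g.mu 0))"
    unfolding is_eigenvalue_def
  proof (rule exI[of _ \<psi>], intro conjI)
    show "is_state n \<psi>" unfolding is_state_def \<psi>_def by simp
    show "\<exists>j<2^n. \<psi> j \<noteq> 0"
      using g.T0_zero g.a_pos by (intro exI[of _ 0]) (simp add: \<psi>_def)
    show "matvec n (Ham n s) \<psi> = (\<lambda>i. of_real (g.mu 0) * \<psi> i)"
    proof (rule ext)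
      fix i
      show "matvec n (Ham n s) \<psi> i = of_real (g.mu 0) * \<psi> i"
      proof (cases "i < 2^n")
        case True
        have "matvec n (Ham n s) \<psi> i = (\<Sum>j<2^n. of_real (g.T 0 j * Hr n s j i))"
          unfolding matvec_def using True
          by (simp add: \<psi>_def, intro sum.cong refl) (simp add: Ham_sym[of n s i] Ham_prod True mult.commute)
        also have "\<dots> = of_real (g.mu 0 * g.T 0 i)" by (simp only: of_real_sum[symmetric] g.T_Hr)
        finally show ?thesis using True by (simp add: \<psi>_def)
      qed (simp add: matvec_def \<psi>_def)
    qed
  qed
  then have ReE: "Re E \<le> g.mu 0" using mn by fastforce
  have evj: "(\<Sum>j<2^n. Ham n s i j * \<alpha> j) = E * \<alpha> i" if "i < 2^n" for i
    using fun_cong[OF ev, of i] that unfolding matvec_def by simp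
  define c where "c x = (\<Sum>j<2^n. of_real (g.T x j) * \<alpha> j)" for x
  have Ec: "E * c x = of_real (g.mu x) * c x" for x
  proof -
    have "E * c x = (\<Sum>j<2^n. of_real (g.T x j) * (E * \<alpha> j))"
      unfolding c_def by (simp add: sum_distrib_left mult.left_commute)
    also have "\<dots> = (\<Sum>j<2^n. of_real (g.T x j) * (\<Sum>j'<2^n. Ham n s j j' * \<alpha> j'))"
      by (intro sum.cong refl) (simp add: evj)
    also have "\<dots> = (\<Sum>j'<2^n. (\<Sum>j<2^n. of_real (g.T x j) * Ham n s j j') * \<alpha> j')"
      unfolding sum_distrib_left sum_distrib_right mult.assoc by (rule sum.swap)
    also have "\<dots> = (\<Sum>j'<2^n. of_real (g.mu x) * (of_real (g.T x j') * \<alpha> j'))"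
    proof (intro sum.cong refl)
      fix j' assume "j' \<in> {..<(2::nat)^n}"
      then have j': "j' < 2^n" by simp
      have "(\<Sum>j<2^n. of_real (g.T x j) * Ham n s j j') = of_real (\<Sum>j<2^n. g.T x j * Hr n s j j')"
        by (simp add: Ham_prod j')
      also have "\<dots> = of_real (g.mu x * g.T x j')" by (simp only: g.T_Hr)
      finally show "(\<Sum>j<2^n. of_real (g.T x j) * Ham n s j j') * \<alpha> j' = of_real (g.mu x) * (of_real (g.T x j') * \<alpha> j')"
        by simp
    qed
    also have "\<dots> = of_real (g.mu x) * c x" unfolding c_def by (simp add: sum_distrib_left)
    finally show ?thesis .
  qed
  have c0: "c x = 0" if "0 < x" "x < 2^n" for x
  proof (rule ccontr)
    assume "c x \<noteq> 0"
    then have "E = of_real (g.mu x)" using Ec[of x] by simp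
    then show False using ReE g.mu_gt[OF that] by simp
  qed
  have compl: "\<alpha> j = of_real (g.T 0 j) * c 0" if j: "j < 2^n" for j
  proof -
    have "(\<Sum>x<2^n. of_real (g.T x j) * c x) = (\<Sum>j'<2^n. of_real (\<Sum>x<2^n. g.T x j * g.T x j') * \<alpha> j')"
      unfolding c_def of_real_sum of_real_mult sum_distrib_left sum_distrib_right mult.assoc by (rule sum.swap)
    also have "\<dots> = (\<Sum>j'<2^n. (if j = j' then \<alpha> j' else 0))"
      by (intro sum.cong refl) (simp add: g.T_orth j)
    also have "\<dots> = \<alpha> j" using j by simp
    finally have A: "\<alpha> j = (\<Sum>x<2^n. of_real (g.T x j) * c x)" by simp
    also have "\<dots> = of_real (g.T 0 j) * c 0 + (\<Sum>x\<in>{..<2^n} - {0}. of_real (g.T x j) * c x)"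
      by (subst sum.remove[OF finite_lessThan, of 0]) auto
    also have "(\<Sum>x\<in>{..<2^n} - {0}. of_real (g.T x j) * c x) = 0"
      by (intro sum.neutral) (auto simp: c0)
    finally show ?thesis by simp
  qed
  have sumT: "(\<Sum>j::nat<2^n. g.T 0 j ^ 2) = 1"
    unfolding g.T0_sq sum_prod_bits[of "\<lambda>i c. if c then b^2 else 1 - b^2" n] by simp
  have c1: "(cmod (c 0))^2 = 1"
  proof -
    have "1 = (\<Sum>j<2^n. (cmod (\<alpha> j))^2)" using nrm by simp
    also have "\<dots> = (\<Sum>j<2^n. (cmod (c 0))^2 * g.T 0 j ^ 2)"
      by (intro sum.cong refl) (simp add: compl norm_mult power_mult_distrib)
    also have "\<dots> = (cmod (c 0))^2" by (simp add: sum_distrib_left[symmetric] sumT)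
    finally show ?thesis by simp
  qed
  define S where "S = {j. j < 2^n \<and> real (hamming n j) \<ge> \<theta>}"
  define q where "q = 1/2 - a*b"
  have P1: "(cmod (\<alpha> j))^2 = (\<Prod>i<n. (if bit j i then b^2 else 1 - b^2))" if "j \<in> S" for j
    using that c1 by (simp add: S_def compl norm_mult power_mult_distrib g.T0_sq)
  have P2: "(cmod (hadamard_amp n j \<alpha>))^2 = (\<Prod>i<n. (if bit j i then q else 1 - q))" for j
  proof -
    have "\<forall>j'<2^n. \<alpha> j' = c 0 * of_real (g.T 0 j')" using compl by (simp add: mult.commute)
    note h = g.had_amp[OF this, of j]
    have "(cmod (hadamard_amp n j \<alpha>))^2 = (cmod (c 0))^2 * (\<Prod>i<n. if bit j i then (a-b)/sqrt 2 else (a+b)/sqrt 2)^2"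
      by (simp only: h norm_mult norm_of_real power_mult_distrib power2_abs)
    then show ?thesis unfolding q_def using c1 g.had_sq[of j] by simp
  qed
  have pb: "0 \<le> b^2" "b^2 \<le> 1/2"
  proof -
    show "0 \<le> b^2" by simp
    have "b^2 \<le> a^2" using H by (intro power_mono) auto
    then show "b^2 \<le> 1/2" using H(1) by linarith
  qed
  have pq: "0 \<le> q" "q \<le> 1/2"
  proof -
    have "0 \<le> (a - b)^2" by simp
    then show "0 \<le> q" using H unfolding q_def by (simp add: power2_eq_square algebra_simps)
    show "q \<le> 1/2" using H unfolding q_def by simp
  qed
  have "(\<Sum>j\<in>S. (cmod (\<alpha> j))^2 + (cmod (hadamard_amp n j \<alpha>))^2)
      = (\<Sum>j\<in>S. \<Prod>i<n. (if bit j i then b^2 else 1 - b^2)) + (\<Sum>j\<in>S. \<Prod>i<n. (if bit j i then q else 1 - q))"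
    by (simp add: sum.distrib P1 P2)
  also have "\<dots> \<le> exp (- (2 * (\<theta> - real n / 2)^2) / (3 * real n)) + exp (- (2 * (\<theta> - real n / 2)^2) / (3 * real n))"
    unfolding S_def by (intro add_mono chernoff pb pq assms(3))
  finally show ?thesis by (simp add: S_def)
qed

end
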